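(* In a synchronized communication system, the uncovering-resilience equals $k-1$, where $k$ is the minimum, over all rings of the system, of the number of robots in the ring (in the system before any robot leaves).
   Context: Model. A system consists of pairwise disjoint unit circles $C_1,\dots,C_n$ in the plane (trajectories) and a communication range $r>0$. Its communication graph $G$ has vertex set $\{C_1,\dots,C_n\}$, $C_i,C_j$ adjacent iff the distance between their centres is at most $2+r$. Positions on a circle are angles (mod $2\pi$). For an edge $(i,j)$, the link position $\phi_{ij}$ is the angle of the point of $C_i$ closest to $C_j$. A schedule $F=(f,g)$ assigns each circle a starting angle $f(C_i)$ and direction $g(C_i)\in\{1,-1\}$; a robot following it on $C_i$ is at $f(C_i)+g(C_i)2\pi t$ at time $t$. $F$ is a synchronization schedule if $g(C_i)=-g(C_j)$ for adjacent circles and robots following $F$ on adjacent $C_i,C_j$ are at $\phi_{ij},\phi_{ji}$ at exactly the same times. A synchronized communication system (SCS) consists of $n$ robots, initially one per circle, following a synchronization schedule, with the switching rule: when a robot on $C_i$ reaches $\phi_{ij}$ and $C_j$ is empty, it instantly passes to $C_j$ and follows the schedule of $C_j$; if $C_j$ has a robot, they meet and each stays on its circle. A partial SCS arises by letting some robots leave (possibly at different times). A trajectory is covered if every point of it is visited periodically by the surviving robots. The uncovering-resilience of an SCS is the largest $k$ such that, whichever $k$ robots leave, all trajectories remain covered. Rings. Trace a point moving along a circle $C_i$ in direction $g(C_i)$; whenever it reaches a link position $\phi_{ij}$ of its current circle, it passes to $C_j$ at $\phi_{ji}$ and continues in direction $g(C_j)$. The closed curve traced is a ring; the circles decompose into rings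 overlapping only at link positions. A robot is in a ring if it lies on a point of that ring. *)

theory Defs
  imports "HOL-Analysis.Analysis"
begin

text \<open>The plane is modelled as the complex numbers. Circles are indexed by
  0..<n; circle i is the unit circle centred at c i. A schedule is given by
  f (starting angles) and g (directions in {1,-1}).\<close>

definition adj :: "nat \<Rightarrow> (nat \<Rightarrow> complex) \<Rightarrow> real \<Rightarrow> nat \<Rightarrow> nat \<Rightarrow> bool" where
  "adj n c r i j \<longleftrightarrow> i < n \<and> j < n \<and> i \<noteq> j \<and> cmod (c i - c j) \<le> 2 + r"

definition linkpt :: "(nat \<Rightarrow> complex) \<Rightarrow> nat \<Rightarrow> nat \<Rightarrow> complex" where
  "linkpt c i j = c i + (c j - c i) / complex_of_real (cmod (c j - c i))"

definition pos :: "(nat \<Rightarrow> complex) \<Rightarrow> (nat \<Rightarrow> real) \<Rightarrow> (nat \<Rightarrow> int) \<Rightarrow> nat \<Rightarrow> real \<Rightarrow> complex" where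
  "pos c f g i t = c i + cis (f i + real_of_int (g i) * 2 * pi * t)"

definition sync_schedule ::
  "nat \<Rightarrow> (nat \<Rightarrow> complex) \<Rightarrow> real \<Rightarrow> (nat \<Rightarrow> real) \<Rightarrow> (nat \<Rightarrow> int) \<Rightarrow> bool" where
  "sync_schedule n c r f g \<longleftrightarrow>
     (\<forall>i<n. g i = 1 \<or> g i = -1) \<and>
     (\<forall>i j. adj n c r i j \<longrightarrow> g i = - g j \<and>
        (\<forall>t. pos c f g i t = linkpt c i j \<longleftrightarrow> pos c f g j t = linkpt c j i))"

definition at_link ::
  "nat \<Rightarrow> (nat \<Rightarrow> complex) \<Rightarrow> real \<Rightarrow> (nat \<Rightarrow> real) \<Rightarrow> (nat \<Rightarrow> int) \<Rightarrow> nat \<Rightarrow> nat \<Rightarrow> real \<Rightarrow> bool" where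
  "at_link n c r f g i j t \<longleftrightarrow> adj n c r i j \<and> pos c f g i t = linkpt c i j"

definition pwc :: "real \<Rightarrow> (real \<Rightarrow> 'b) \<Rightarrow> bool" where
  "pwc s x \<longleftrightarrow>
     (\<forall>t\<ge>s. \<exists>e>0. \<forall>u. t \<le> u \<and> u < t + e \<longrightarrow> x u = x t) \<and>
     (\<forall>t>s. \<exists>e>0. \<exists>v. \<forall>u. t - e < u \<and> u < t \<longrightarrow> x u = v)"

definition leftval :: "(real \<Rightarrow> 'b) \<Rightarrow> real \<Rightarrow> 'b" where
  "leftval x t = (SOME v. \<exists>e>0. \<forall>u. t - e < u \<and> u < t \<longrightarrow> x u = v)"

text \<open>A point starting on circle i at the schedule position of
  time s, moving along its current circle in the scheduled direction at the
  scheduled speed, and passing to C_j at every link position phi_ij it reaches.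
  tok t is the circle the tracing point is on at time t (right-continuous);
  by synchronization, the tracing point is then at pos c f g (tok t) t.\<close>
definition ring_trace ::
  "nat \<Rightarrow> (nat \<Rightarrow> complex) \<Rightarrow> real \<Rightarrow> (nat \<Rightarrow> real) \<Rightarrow> (nat \<Rightarrow> int) \<Rightarrow> nat \<Rightarrow> real \<Rightarrow> (real \<Rightarrow> nat) \<Rightarrow> bool" where
  "ring_trace n c r f g i s tok \<longleftrightarrow>
     tok s = i \<and> pwc s tok \<and>
     (\<forall>t>s. (\<forall>j. at_link n c r f g (leftval tok t) j t \<longrightarrow> tok t = j) \<and>
            ((\<forall>j. \<not> at_link n c r f g (leftval tok t) j t) \<longrightarrow> tok t = leftval tok t))"

definition ring_points ::
  "(nat \<Rightarrow> complex) \<Rightarrow> (nat \<Rightarrow> real) \<Rightarrow> (nat \<Rightarrow> int) \<Rightarrow> real \<Rightarrow> (real \<Rightarrow> nat) \<Rightarrow> (nat \<times> complex) set" where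
  "ring_points c f g s tok = {(tok t, pos c f g (tok t) t) | t. t \<ge> s}"

definition rings ::
  "nat \<Rightarrow> (nat \<Rightarrow> complex) \<Rightarrow> real \<Rightarrow> (nat \<Rightarrow> real) \<Rightarrow> (nat \<Rightarrow> int) \<Rightarrow> (nat \<times> complex) set set" where
  "rings n c r f g =
     {ring_points c f g s tok | i s tok. i < n \<and> ring_trace n c r f g i s tok}"

text \<open>Robots (indexed by their initial circle m) lying in ring R at time 0.\<close>
definition robots_in_ring ::
  "nat \<Rightarrow> (nat \<Rightarrow> complex) \<Rightarrow> (nat \<Rightarrow> real) \<Rightarrow> (nat \<Rightarrow> int) \<Rightarrow> (nat \<times> complex) set \<Rightarrow> nat set" where
  "robots_in_ring n c f g R = {m. m < n \<and> (m, pos c f g m 0) \<in> R}"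

text \<open>Robot m starts on C_m; robots in L leave at
  time tau m (absent at all times t \<ge> tau m). loc m t = Some i means robot m
  is on circle i at time t (hence at position pos c f g i t); None means it has left.\<close>
definition occupied_before :: "nat \<Rightarrow> (nat \<Rightarrow> real \<Rightarrow> nat option) \<Rightarrow> nat \<Rightarrow> real \<Rightarrow> bool" where
  "occupied_before n loc j t \<longleftrightarrow> (\<exists>m<n. leftval (loc m) t = Some j)"

definition scs_run ::
  "nat \<Rightarrow> (nat \<Rightarrow> complex) \<Rightarrow> real \<Rightarrow> (nat \<Rightarrow> real) \<Rightarrow> (nat \<Rightarrow> int) \<Rightarrow>
   nat set \<Rightarrow> (nat \<Rightarrow> real) \<Rightarrow> (nat \<Rightarrow> real \<Rightarrow> nat option) \<Rightarrow> bool" where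
  "scs_run n c r f g L tau loc \<longleftrightarrow>
     (\<forall>m<n. pwc 0 (loc m) \<and>
        (\<forall>t\<ge>0. loc m t = None \<longleftrightarrow> (m \<in> L \<and> tau m \<le> t)) \<and>
        (\<not> (m \<in> L \<and> tau m \<le> 0) \<longrightarrow> loc m 0 = Some m) \<and>
        (\<forall>t>0. \<forall>i. loc m t \<noteq> None \<longrightarrow> leftval (loc m) t = Some i \<longrightarrow>
           (\<forall>j. at_link n c r f g i j t \<and> \<not> occupied_before n loc j t \<longrightarrow> loc m t = Some j) \<and>
           ((\<forall>j. \<not> (at_link n c r f g i j t \<and> \<not> occupied_before n loc j t)) \<longrightarrow> loc m t = Some i)))"

definition covered ::
  "nat \<Rightarrow> (nat \<Rightarrow> complex) \<Rightarrow> (nat \<Rightarrow> real) \<Rightarrow> (nat \<Rightarrow> int) \<Rightarrow> (nat \<Rightarrow> real \<Rightarrow> nat option) \<Rightarrow> bool" where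
  "covered n c f g loc \<longleftrightarrow>
     (\<forall>i<n. \<forall>p. cmod (p - c i) = 1 \<longrightarrow>
        (\<forall>T. \<exists>t\<ge>T. \<exists>m<n. loc m t = Some i \<and> pos c f g i t = p))"

definition resilient ::
  "nat \<Rightarrow> (nat \<Rightarrow> complex) \<Rightarrow> real \<Rightarrow> (nat \<Rightarrow> real) \<Rightarrow> (nat \<Rightarrow> int) \<Rightarrow> nat \<Rightarrow> bool" where
  "resilient n c r f g k \<longleftrightarrow>
     (\<forall>L tau loc. L \<subseteq> {..<n} \<and> card L \<le> k \<and> (\<forall>m. 0 \<le> tau m) \<and>
        scs_run n c r f g L tau loc \<longrightarrow> covered n c f g loc)"

definition uncovering_resilience ::
  "nat \<Rightarrow> (nat \<Rightarrow> complex) \<Rightarrow> real \<Rightarrow> (nat \<Rightarrow> real) \<Rightarrow> (nat \<Rightarrow> int) \<Rightarrow> int \<Rightarrow> bool" where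
  "uncovering_resilience n c r f g x \<longleftrightarrow> x \<in> {int k | k. resilient n c r f g k} \<and> (\<forall>y \<in> {int k | k. resilient n c r f g k}. y \<le> x)"

definition min_ring_robots ::
  "nat \<Rightarrow> (nat \<Rightarrow> complex) \<Rightarrow> real \<Rightarrow> (nat \<Rightarrow> real) \<Rightarrow> (nat \<Rightarrow> int) \<Rightarrow> nat \<Rightarrow> bool" where
  "min_ring_robots n c r f g k \<longleftrightarrow>
     (\<exists>R \<in> rings n c r f g. card (robots_in_ring n c f g R) = k) \<and>
     (\<forall>R \<in> rings n c r f g. k \<le> card (robots_in_ring n c f g R))"

end

theory Submission
  imports Defs
begin

lemma cis_eq_1_int: "cis a = 1 \<Longrightarrow> \<exists>z::int. a = of_int z * 2 * pi"
proof -
  assume "cis a = 1"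
  then have "Re (cis a) = Re 1" by simp
  then have "cos a = 1" by simp
  then show ?thesis using cos_one_2pi_int by auto
qed

lemma cis_shift_int: "cis (x + 2 * pi * of_int z) = cis x"
proof -
  have "cis (2 * pi * of_int z) = 1" by (simp)
  then show ?thesis by (simp add: cis_mult[symmetric])
qed

lemma leftval_eq:
  assumes "\<forall>\<^sub>F u in at_left t. x u = v"
  shows "leftval x t = v"
proof -
  from assms obtain b where b: "b < t" "\<forall>u>b. u < t \<longrightarrow> x u = v"
    by (auto simp: eventually_at_left_field)
  have ex: "\<exists>e>0. \<forall>u. t - e < u \<and> u < t \<longrightarrow> x u = v"
    using b by (intro exI[of _ "t - b"]) auto
  have "\<exists>e>0. \<forall>u. t - e < u \<and> u < t \<longrightarrow> x u = leftval x t"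
    unfolding leftval_def by (rule someI_ex) (use ex in blast)
  then obtain e where e: "e > 0" "\<forall>u. t - e < u \<and> u < t \<longrightarrow> x u = leftval x t" by blast
  define m where "m = min e (t - b)"
  define u where "u = t - m / 2"
  have m1: "m \<le> e" "m \<le> t - b" "m > 0" using e b by (auto simp: m_def)
  have "t - e < u" using m1 unfolding u_def by linarith
  moreover have "u < t" using m1 unfolding u_def by linarith
  moreover have "b < u" using m1 unfolding u_def by linarith
  ultimately have "t - e < u" "u < t" "b < u" by auto
  then have "x u = leftval x t" "x u = v" using e(2) b(2) by auto
  then show ?thesis by simp
qed

lemma pwc_right:
  assumes "pwc s x" "t \<ge> s"
  shows "\<forall>\<^sub>F u in at_right t. x u = x t"
proof -
  have "\<forall>t\<ge>s. \<exists>e>0. \<forall>u. t \<le> u \<and> u < t + e \<longrightarrow> x u = x t"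
    using assms(1) unfolding pwc_def by (rule conjunct1)
  then have "\<exists>e>0. \<forall>u. t \<le> u \<and> u < t + e \<longrightarrow> x u = x t"
    using assms(2) by simp
  then obtain e where "e > 0" "\<forall>u. t \<le> u \<and> u < t + e \<longrightarrow> x u = x t"
    by (elim exE conjE)
  then show ?thesis unfolding eventually_at_right_field
  proof (intro exI[of _ "t + e"] conjI allI impI)
    fix y assume "t < y" "y < t + e"
    then show "x y = x t" using \<open>\<forall>u. t \<le> u \<and> u < t + e \<longrightarrow> x u = x t\<close> less_imp_le by blast
  qed (use \<open>e > 0\<close> in simp)
qed

lemma pwc_left:
  assumes "pwc s x" "t > s"
  shows "\<forall>\<^sub>F u in at_left t. x u = leftval x t"
proof -
  have "\<forall>t>s. \<exists>e>0. \<exists>v. \<forall>u. t - e < u \<and> u < t \<longrightarrow> x u = v"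
    using assms(1) unfolding pwc_def by (rule conjunct2)
  then have "\<exists>e>0. \<exists>v. \<forall>u. t - e < u \<and> u < t \<longrightarrow> x u = v"
    using assms(2) by simp
  then obtain e v where ev: "e > 0" "\<forall>u. t - e < u \<and> u < t \<longrightarrow> x u = v"
    by (elim exE conjE)
  then have E: "\<forall>\<^sub>F u in at_left t. x u = v" unfolding eventually_at_left_field
    by (intro exI[of _ "t - e"]) auto
  then have "leftval x t = v" by (rule leftval_eq)
  then show ?thesis using E by simp
qed

lemma pwcI:
  assumes "\<And>t. t \<ge> s \<Longrightarrow> \<forall>\<^sub>F u in at_right t. x u = x t"
    and "\<And>t. t > s \<Longrightarrow> \<exists>v. \<forall>\<^sub>F u in at_left t. x u = v"
  shows "pwc s x"
  unfolding pwc_def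
proof safe
  fix t assume "t \<ge> s"
  from assms(1)[OF this] obtain b where "b > t" "\<forall>u>t. u < b \<longrightarrow> x u = x t"
    by (auto simp: eventually_at_right_field)
  then show "\<exists>e>0. \<forall>u. t \<le> u \<and> u < t + e \<longrightarrow> x u = x t"
  proof (intro exI[of _ "b - t"] conjI allI impI)
    fix u assume "t \<le> u \<and> u < t + (b - t)"
    then have "u = t \<or> (t < u \<and> u < b)" by auto
    then show "x u = x t" using \<open>\<forall>u>t. u < b \<longrightarrow> x u = x t\<close> by blast
  qed (use \<open>b > t\<close> in auto)
next
  fix t assume "t > s"
  from assms(2)[OF this] obtain v b where "b < t" "\<forall>u>b. u < t \<longrightarrow> x u = v"
    by (auto simp: eventually_at_left_field)
  then show "\<exists>e>0. \<exists>v. \<forall>u. t - e < u \<and> u < t \<longrightarrow> x u = v"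
    by (intro exI[of _ "t - b"]) auto
qed

lemma real_induct_filter:
  fixes s :: real
  assumes base: "Q s"
    and left: "\<And>t. t > s \<Longrightarrow> \<forall>\<^sub>F u in at_left t. Q u \<Longrightarrow> Q t"
    and right: "\<And>t. t \<ge> s \<Longrightarrow> Q t \<Longrightarrow> \<forall>\<^sub>F u in at_right t. Q u"
    and "t \<ge> s"
  shows "Q t"
proof (rule ccontr)
  assume nQ: "\<not> Q t"
  define A where "A = {u. u \<ge> s \<and> \<not> Q u}"
  have Ane: "A \<noteq> {}" using nQ assms(4) A_def by auto
  have Abd: "bdd_below A" unfolding A_def bdd_below_def by auto
  define T where "T = Inf A"
  have Ts: "T \<ge> s" unfolding T_def using Ane by (intro cInf_greatest) (auto simp: A_def)
  have below: "Q u" if "s \<le> u" "u < T" for u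
  proof (rule ccontr)
    assume "\<not> Q u" then have "u \<in> A" using that A_def by auto
    then have "T \<le> u" unfolding T_def using Abd by (rule cInf_lower)
    then show False using that by auto
  qed
  have QT: "Q T"
  proof (cases "T = s")
    case True then show ?thesis using base by simp
  next
    case False
    then have "T > s" using Ts by auto
    moreover have "\<forall>\<^sub>F u in at_left T. Q u"
      unfolding eventually_at_left_field using \<open>T > s\<close> below
      by (intro exI[of _ s]) auto
    ultimately show ?thesis using left by blast
  qed
  from right[OF Ts QT] obtain b where b: "b > T" "\<forall>u>T. u < b \<longrightarrow> Q u"
    by (auto simp: eventually_at_right_field)
  have "b \<le> T" unfolding T_def
  proof (rule cInf_greatest[OF Ane])
    fix x assume "x \<in> A"
    then have "x \<ge> T" unfolding T_def using Abd by (rule cInf_lower)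
    show "b \<le> x"
    proof (rule ccontr)
      assume "\<not> b \<le> x"
      show False
      proof (cases "x = T")
        case True then show False using QT \<open>x \<in> A\<close> unfolding A_def by simp
      next
        case False
        then have "x > T" using \<open>x \<ge> T\<close> by simp
        then have "Q x" using b \<open>\<not> b \<le> x\<close> by simp
        then show False using \<open>x \<in> A\<close> unfolding A_def by simp
      qed
    qed
  qed
  then show False using b by simp
qed

lemma involution_image:
  assumes inv: "\<And>x. \<sigma> (\<sigma> x) = x"
  shows "(\<lambda>x. if \<sigma> x \<notin> A then \<sigma> x else x) ` A = \<sigma> ` A"
    and "inj_on (\<lambda>x. if \<sigma> x \<notin> A then \<sigma> x else x) A"
proof -
  show "(\<lambda>x. if \<sigma> x \<notin> A then \<sigma> x else x) ` A = \<sigma> ` A"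
  proof (intro equalityI subsetI)
    fix y assume "y \<in> (\<lambda>x. if \<sigma> x \<notin> A then \<sigma> x else x) ` A"
    then obtain x where x: "x \<in> A" "y = (if \<sigma> x \<notin> A then \<sigma> x else x)" by blast
    show "y \<in> \<sigma> ` A"
    proof (cases "\<sigma> x \<in> A")
      case True then show ?thesis using x inv by (metis image_eqI)
    next
      case False then show ?thesis using x by auto
    qed
  next
    fix y assume "y \<in> \<sigma> ` A"
    then obtain x where x: "x \<in> A" "y = \<sigma> x" by blast
    show "y \<in> (\<lambda>x. if \<sigma> x \<notin> A then \<sigma> x else x) ` A"
    proof (cases "\<sigma> x \<in> A")
      case True
      then show ?thesis using x inv by (intro image_eqI[of _ _ "\<sigma> x"]) auto
    next
      case False then show ?thesis using x by (intro image_eqI[of _ _ x]) auto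
    qed
  qed
  show "inj_on (\<lambda>x. if \<sigma> x \<notin> A then \<sigma> x else x) A"
  proof (rule inj_onI)
    fix x y assume xy: "x \<in> A" "y \<in> A"
      "(if \<sigma> x \<notin> A then \<sigma> x else x) = (if \<sigma> y \<notin> A then \<sigma> y else y)"
    show "x = y"
    proof (cases "\<sigma> x \<notin> A"; cases "\<sigma> y \<notin> A")
      assume "\<sigma> x \<notin> A" "\<sigma> y \<notin> A"
      then have "\<sigma> x = \<sigma> y" using xy(3) by simp
      then show ?thesis by (metis inv)
    next
      assume "\<sigma> x \<notin> A" "\<not> \<sigma> y \<notin> A"
      then have "\<sigma> x = y" using xy(3) by simp
      then show ?thesis using \<open>\<sigma> x \<notin> A\<close> xy(2) by simp
    next
      assume "\<not> \<sigma> x \<notin> A" "\<sigma> y \<notin> A"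
      then have "x = \<sigma> y" using xy(3) by simp
      then show ?thesis using \<open>\<sigma> y \<notin> A\<close> xy(1) by simp
    next
      assume "\<not> \<sigma> x \<notin> A" "\<not> \<sigma> y \<notin> A"
      then show ?thesis using xy(3) by simp
    qed
  qed
qed

lemma sl_eqI:
  fixes A :: "real set"
  assumes "finite A" "sorted_wrt (<) l" "set l = A"
  shows "sorted_list_of_set A = l"
proof -
  have "sorted_wrt (<) (sorted_list_of_set A)" by (rule strict_sorted_list_of_set)
  moreover have "set (sorted_list_of_set A) = A" using assms(1) by simp
  ultimately show ?thesis using assms(2,3) strict_sorted_equal by metis
qed

lemma sl_append:
  fixes A B :: "real set"
  assumes "finite A" "finite B" "\<forall>a\<in>A. \<forall>b\<in>B. a < b"
  shows "sorted_list_of_set (A \<union> B) = sorted_list_of_set A @ sorted_list_of_set B"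
proof (rule sl_eqI)
  show "sorted_wrt (<) (sorted_list_of_set A @ sorted_list_of_set B)"
    unfolding sorted_wrt_append using assms strict_sorted_list_of_set[of A] strict_sorted_list_of_set[of B]
    by simp
qed (use assms in auto)

lemma sl_shift:
  fixes A :: "real set"
  assumes "finite A"
  shows "sorted_list_of_set ((\<lambda>x. x + d) ` A) = map (\<lambda>x. x + d) (sorted_list_of_set A)"
proof (rule sl_eqI)
  show "sorted_wrt (<) (map (\<lambda>x. x + d) (sorted_list_of_set A))"
    unfolding sorted_wrt_map using strict_sorted_list_of_set[of A] by simp
qed (use assms in auto)

locale scs =
  fixes n :: nat and c :: "nat \<Rightarrow> complex" and r :: real and f :: "nat \<Rightarrow> real" and g :: "nat \<Rightarrow> int"
  assumes dl: "\<forall>i j j'. adj n c r i j \<and> adj n c r i j' \<and> j \<noteq> j' \<longrightarrow> linkpt c i j \<noteq> linkpt c i j'"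
    and sy: "sync_schedule n c r f g"
begin

abbreviation AL where "AL i j t \<equiv> at_link n c r f g i j t"

lemma AL_lt: "AL i j t \<Longrightarrow> i < n \<and> j < n" by (simp add: at_link_def adj_def)

lemma gpm: "i < n \<Longrightarrow> g i = 1 \<or> g i = -1" using sy by (simp add: sync_schedule_def)

lemma pos_shift: "pos c f g i (t + of_int z) = pos c f g i t"
proof -
  have "f i + real_of_int (g i) * 2 * pi * (t + of_int z)
        = (f i + real_of_int (g i) * 2 * pi * t) + 2 * pi * of_int (g i * z)"
    by (simp add: algebra_simps)
  then show ?thesis unfolding pos_def by (simp only: cis_shift_int)
qed

lemma pos_shift1: "pos c f g i (t + 1) = pos c f g i t"
  using pos_shift[of i t 1] by simp

lemma AL_shift: "AL i j (t + of_int z) \<longleftrightarrow> AL i j t"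
  by (simp add: at_link_def pos_shift)

lemma adj_sym: "adj n c r i j \<Longrightarrow> adj n c r j i"
  by (auto simp: adj_def norm_minus_commute)

lemma AL_sym: "AL i j t \<Longrightarrow> AL j i t"
proof -
  assume a: "AL i j t"
  then have "adj n c r i j" by (simp add: at_link_def)
  moreover have "\<forall>i j. adj n c r i j \<longrightarrow> (\<forall>t. pos c f g i t = linkpt c i j \<longleftrightarrow> pos c f g j t = linkpt c j i)"
    using sy unfolding sync_schedule_def by blast
  ultimately have "pos c f g i t = linkpt c i j \<longleftrightarrow> pos c f g j t = linkpt c j i"
    by blast
  then show ?thesis using a adj_sym by (simp add: at_link_def)
qed

lemma AL_uniq: assumes "AL i j t" "AL i j' t" shows "j = j'"
proof (rule ccontr)
  assume "j \<noteq> j'"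
  moreover have "adj n c r i j" "adj n c r i j'" "linkpt c i j = linkpt c i j'"
    using assms unfolding at_link_def by auto
  ultimately show False using dl by blast
qed

definition sig :: "real \<Rightarrow> nat \<Rightarrow> nat" where
  "sig t i = (if \<exists>j. AL i j t then (THE j. AL i j t) else i)"

lemma sig_AL: assumes "AL i j t" shows "sig t i = j"
proof -
  have "(THE j. AL i j t) = j" by (rule the_equality) (use assms AL_uniq in blast)+
  then show ?thesis unfolding sig_def using assms by auto
qed

lemma sig_noAL: "\<not> (\<exists>j. AL i j t) \<Longrightarrow> sig t i = i"
  unfolding sig_def by simp

lemma sig_invol: "sig t (sig t i) = i"
proof (cases "\<exists>j. AL i j t")
  case True
  then obtain j where "AL i j t" by blast
  then show ?thesis using sig_AL AL_sym by metis
next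
  case False then show ?thesis by (simp add: sig_noAL)
qed

lemma sig_inj: "sig t i = sig t j \<Longrightarrow> i = j"
  by (metis sig_invol)

lemma sig_lt: assumes "i < n" shows "sig t i < n"
proof (cases "\<exists>j. AL i j t")
  case True
  then obtain j where "AL i j t" by blast
  then show ?thesis using sig_AL AL_lt by simp
next
  case False then show ?thesis using assms by (simp add: sig_noAL)
qed

lemma sig_shift: "sig (t + of_int z) = sig t"
  by (rule ext) (simp add: sig_def AL_shift)

definition Ev :: "real set" where "Ev = {t. \<exists>i j. AL i j t}"

lemma sig_notEv: "t \<notin> Ev \<Longrightarrow> sig t i = i"
  unfolding Ev_def by (simp add: sig_noAL)

lemma Ev_shift: "t + of_int z \<in> Ev \<longleftrightarrow> t \<in> Ev"
  unfolding Ev_def by (simp add: AL_shift)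

lemma pos_diff_int:
  assumes "i < n" "pos c f g i t1 = pos c f g i t2"
  shows "\<exists>z::int. t1 = t2 + of_int z"
proof -
  define A1 where "A1 = f i + real_of_int (g i) * 2 * pi * t1"
  define A2 where "A2 = f i + real_of_int (g i) * 2 * pi * t2"
  have "cis A1 = cis A2" using assms(2) by (simp add: pos_def A1_def A2_def)
  then have "cis (A1 - A2) = 1" by (simp flip: cis_divide)
  then obtain z where z: "A1 - A2 = of_int z * 2 * pi" using cis_eq_1_int by blast
  have "A1 - A2 = real_of_int (g i) * (t1 - t2) * 2 * pi" by (simp add: A1_def A2_def algebra_simps)
  with z have "real_of_int (g i) * (t1 - t2) = of_int z" by simp
  then have "t1 - t2 = of_int (g i * z)"
    using gpm[OF assms(1)] by auto
  then show ?thesis by (intro exI[of _ "g i * z"]) simp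
qed

lemma finite_AL: "finite {t. AL i j t \<and> a \<le> t \<and> t \<le> b}"
proof (cases "{t. AL i j t \<and> a \<le> t \<and> t \<le> b} = {}")
  case True then show ?thesis by (metis finite.emptyI)
next
  case False
  then obtain t0 where t0: "AL i j t0" by blast
  have "{t. AL i j t \<and> a \<le> t \<and> t \<le> b} \<subseteq> (\<lambda>z. t0 + of_int z) ` {\<lfloor>a - t0\<rfloor>..\<lceil>b - t0\<rceil>}"
  proof
    fix t assume "t \<in> {t. AL i j t \<and> a \<le> t \<and> t \<le> b}"
    then have t: "AL i j t" "a \<le> t" "t \<le> b" by auto
    have "pos c f g i t = pos c f g i t0" using t(1) t0 by (simp add: at_link_def)
    then obtain z where z: "t = t0 + of_int z" using pos_diff_int AL_lt[OF t0] by blast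
    have "\<lfloor>a - t0\<rfloor> \<le> z" using z t(2) by linarith
    moreover have "z \<le> \<lceil>b - t0\<rceil>" using z t(3) by linarith
    ultimately show "t \<in> (\<lambda>z. t0 + of_int z) ` {\<lfloor>a - t0\<rfloor>..\<lceil>b - t0\<rceil>}" using z by auto
  qed
  then show ?thesis by (rule finite_subset) simp
qed

lemma finite_Ev: "finite (Ev \<inter> {a..b})"
proof -
  have "Ev \<inter> {a..b} \<subseteq> (\<Union>i<n. \<Union>j<n. {t. AL i j t \<and> a \<le> t \<and> t \<le> b})"
  proof
    fix t assume "t \<in> Ev \<inter> {a..b}"
    then obtain i j where ij: "AL i j t" "a \<le> t" "t \<le> b" unfolding Ev_def by auto
    then have "i < n" "j < n" using AL_lt by auto
    then show "t \<in> (\<Union>i<n. \<Union>j<n. {t. AL i j t \<and> a \<le> t \<and> t \<le> b})" using ij by blast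
  qed
  moreover have "finite (\<Union>i<n. \<Union>j<n. {t. AL i j t \<and> a \<le> t \<and> t \<le> b})" using finite_AL by simp
  ultimately show ?thesis by (rule finite_subset)
qed

lemma Ev_isolated: "\<exists>d>0. \<forall>u. u \<noteq> t \<and> \<bar>u - t\<bar> < d \<longrightarrow> u \<notin> Ev"
proof -
  obtain \<delta> where \<delta>: "\<delta> > 0" "\<forall>x\<in>Ev \<inter> {t-1..t+1}. x \<noteq> t \<longrightarrow> \<delta> \<le> dist t x"
    using finite_set_avoid[OF finite_Ev[of "t-1" "t+1"], of t] by blast
  show ?thesis
  proof (intro exI[of _ "min \<delta> 1"] conjI allI impI)
    fix u assume u: "u \<noteq> t \<and> \<bar>u - t\<bar> < min \<delta> 1"
    show "u \<notin> Ev"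
    proof
      assume "u \<in> Ev"
      moreover have "u \<in> {t-1..t+1}" using u by auto
      ultimately have "\<delta> \<le> dist t u" using \<delta>(2) u by blast
      then show False using u by (simp add: dist_real_def abs_minus_commute)
    qed
  qed (use \<delta> in simp)
qed

lemma finite_Ev2: "finite (Ev \<inter> {s<..t})" "finite (Ev \<inter> {s<..<t})"
  by (rule finite_subset[OF _ finite_Ev[of s t]]; auto)+

definition evs :: "real \<Rightarrow> real \<Rightarrow> real list" where
  "evs s t = sorted_list_of_set (Ev \<inter> {s<..t})"
definition evo :: "real \<Rightarrow> real \<Rightarrow> real list" where
  "evo s t = sorted_list_of_set (Ev \<inter> {s<..<t})"

lemma evs_refl: "evs s s = []" by (simp add: evs_def)

lemma evs_app: assumes "s \<le> t" "t \<le> u" shows "evs s u = evs s t @ evs t u"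
proof -
  have "Ev \<inter> {s<..u} = (Ev \<inter> {s<..t}) \<union> (Ev \<inter> {t<..u})" using assms by auto
  then show ?thesis unfolding evs_def by (simp add: sl_append finite_Ev2)
qed

lemma evs_split: assumes "s < t" shows "evs s t = evo s t @ (if t \<in> Ev then [t] else [])"
proof (cases "t \<in> Ev")
  case True
  then have e: "Ev \<inter> {s<..t} = (Ev \<inter> {s<..<t}) \<union> {t}" using assms by auto
  have "sorted_list_of_set ((Ev \<inter> {s<..<t}) \<union> {t}) = sorted_list_of_set (Ev \<inter> {s<..<t}) @ sorted_list_of_set {t}"
    by (rule sl_append) (auto simp: finite_Ev2)
  then show ?thesis using True unfolding evs_def evo_def e by simp
next
  case False
  then have "Ev \<inter> {s<..t} = Ev \<inter> {s<..<t}" by (auto simp: le_less)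
  then show ?thesis using False unfolding evs_def evo_def by simp
qed

lemma evs_shift: "evs (s + of_int z) (t + of_int z) = map (\<lambda>x. x + of_int z) (evs s t)"
proof -
  have "Ev \<inter> {s + of_int z<..t + of_int z} = (\<lambda>x. x + of_int z) ` (Ev \<inter> {s<..t})"
  proof (intro equalityI subsetI)
    fix x assume x: "x \<in> Ev \<inter> {s + of_int z<..t + of_int z}"
    have "x - of_int z + of_int z \<in> Ev" using x by simp
    then have "x - of_int z \<in> Ev" by (simp only: Ev_shift)
    then show "x \<in> (\<lambda>x. x + of_int z) ` (Ev \<inter> {s<..t})" using x by (intro image_eqI[of _ _ "x - of_int z"]) auto
  qed (auto simp: Ev_shift)
  then show ?thesis unfolding evs_def by (simp add: sl_shift finite_Ev2)
qed

end

context scs begin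
definition FS :: "real list \<Rightarrow> nat \<Rightarrow> nat" where
  "FS es i = foldl (\<lambda>x e. sig e x) i es"

lemma FS_Cons: "FS (e # es) i = FS es (sig e i)" by (simp add: FS_def)
lemma FS_Nil: "FS [] i = i" by (simp add: FS_def)

lemma FS_lt: "i < n \<Longrightarrow> FS es i < n"
proof (induction es arbitrary: i)
  case Nil then show ?case by (simp add: FS_Nil)
next
  case (Cons e es) then show ?case by (simp add: FS_Cons sig_lt)
qed

lemma FS_inj: "FS es i = FS es j \<Longrightarrow> i = j"
proof (induction es arbitrary: i j)
  case Nil then show ?case by (simp add: FS_Nil)
next
  case (Cons e es)
  then have "sig e i = sig e j" by (simp add: FS_Cons)
  then show ?case by (rule sig_inj)
qed

lemma FS_append: "FS (xs @ ys) i = FS ys (FS xs i)" by (simp add: FS_def)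

lemma FS_image: "FS es ` {..<n} = {..<n}"
proof (rule endo_inj_surj)
  show "FS es ` {..<n} \<subseteq> {..<n}" using FS_lt by blast
  show "inj_on (FS es) {..<n}" by (rule inj_onI) (rule FS_inj)
qed simp

lemma FS_surj: assumes "j < n" shows "\<exists>i<n. FS es i = j"
proof -
  have "j \<in> FS es ` {..<n}" using assms FS_image by simp
  then obtain i where "i < n" "FS es i = j" by auto
  then show ?thesis by blast
qed

definition PP :: "real \<Rightarrow> real \<Rightarrow> nat \<Rightarrow> nat" where "PP s t = FS (evs s t)"
definition PO :: "real \<Rightarrow> real \<Rightarrow> nat \<Rightarrow> nat" where "PO s t = FS (evo s t)"

lemma Pi_refl: "PP s s i = i" by (simp add: PP_def evs_refl FS_def)

lemma Pi_comp: assumes "s \<le> t" "t \<le> u" shows "PP s u i = PP t u (PP s t i)"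
proof -
  have "evs s u = evs s t @ evs t u" using assms by (rule evs_app)
  then show ?thesis by (simp add: PP_def FS_append)
qed

lemma Pi_step: "s < t \<Longrightarrow> PP s t i = sig t (PO s t i)"
  by (auto simp: PP_def PO_def evs_split FS_append FS_def sig_notEv)

lemma Pi_shift: "PP (s + of_int z) (t + of_int z) = PP s t"
proof (rule ext)
  fix i
  have "foldl (\<lambda>x e. sig e x) i (map (\<lambda>x. x + of_int z) (evs s t)) = foldl (\<lambda>x e. sig e x) i (evs s t)"
    by (simp add: foldl_map sig_shift)
  then show "PP (s + of_int z) (t + of_int z) i = PP s t i"
    by (simp add: PP_def FS_def evs_shift)
qed

lemma evs_right: assumes "s \<le> t" shows "\<forall>\<^sub>F u in at_right t. evs s u = evs s t"
proof -
  obtain d where d: "d > 0" "\<forall>u. u \<noteq> t \<and> \<bar>u - t\<bar> < d \<longrightarrow> u \<notin> Ev" using Ev_isolated by blast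
  have "\<forall>u. t < u \<and> u < t + d \<longrightarrow> evs s u = evs s t"
  proof (intro allI impI)
    fix u assume u: "t < u \<and> u < t + d"
    have "Ev \<inter> {s<..u} = Ev \<inter> {s<..t}"
    proof (intro equalityI subsetI)
      fix x assume x: "x \<in> Ev \<inter> {s<..u}"
      have "x \<le> t"
      proof (rule ccontr)
        assume "\<not> x \<le> t"
        then have "x \<noteq> t \<and> \<bar>x - t\<bar> < d" using x u by auto
        then show False using d(2) x by blast
      qed
      then show "x \<in> Ev \<inter> {s<..t}" using x by simp
    next
      fix x assume "x \<in> Ev \<inter> {s<..t}"
      then show "x \<in> Ev \<inter> {s<..u}" using u by simp
    qed
    then show "evs s u = evs s t" by (simp add: evs_def)
  qed
  then show ?thesis unfolding eventually_at_right_field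
    by (intro exI[of _ "t + d"]) (use d in simp)
qed

lemma evs_left: assumes "s < t" shows "\<forall>\<^sub>F u in at_left t. evs s u = evo s t"
proof -
  obtain d where d: "d > 0" "\<forall>u. u \<noteq> t \<and> \<bar>u - t\<bar> < d \<longrightarrow> u \<notin> Ev" using Ev_isolated by blast
  have "\<forall>u. max s (t - d) < u \<and> u < t \<longrightarrow> evs s u = evo s t"
  proof (intro allI impI)
    fix u assume u: "max s (t - d) < u \<and> u < t"
    have "Ev \<inter> {s<..u} = Ev \<inter> {s<..<t}"
    proof (intro equalityI subsetI)
      fix x assume x: "x \<in> Ev \<inter> {s<..<t}"
      have "x \<le> u"
      proof (rule ccontr)
        assume "\<not> x \<le> u"
        then have "x \<noteq> t \<and> \<bar>x - t\<bar> < d" using x u by auto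
        then show False using d(2) x by blast
      qed
      then show "x \<in> Ev \<inter> {s<..u}" using x by simp
    next
      fix x assume "x \<in> Ev \<inter> {s<..u}"
      then show "x \<in> Ev \<inter> {s<..<t}" using u by simp
    qed
    then show "evs s u = evo s t" by (simp add: evs_def evo_def)
  qed
  then show ?thesis unfolding eventually_at_left_field
    by (intro exI[of _ "max s (t - d)"]) (use d assms in simp)
qed

lemma pwc_evs: "pwc s (\<lambda>t. F (evs s t))"
proof (rule pwcI)
  fix t assume "s \<le> t"
  from evs_right[OF this] show "\<forall>\<^sub>F u in at_right t. F (evs s u) = F (evs s t)"
    by eventually_elim simp
next
  fix t assume "s < t"
  from evs_left[OF this] have "\<forall>\<^sub>F u in at_left t. F (evs s u) = F (evo s t)"
    by eventually_elim simp
  then show "\<exists>v. \<forall>\<^sub>F u in at_left t. F (evs s u) = v" by blast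
qed

lemma leftval_evs: assumes "s < t" shows "leftval (\<lambda>t. F (evs s t)) t = F (evo s t)"
proof (rule leftval_eq)
  from evs_left[OF assms] show "\<forall>\<^sub>F u in at_left t. F (evs s u) = F (evo s t)"
    by eventually_elim simp
qed

end

context scs begin

lemma ev_exists_left: "\<forall>\<^sub>F u in at_left (t::real). P u \<Longrightarrow> \<exists>u. P u"
  using eventually_happens trivial_limit_at_left_real by blast

lemma ev_exists_right: "\<forall>\<^sub>F u in at_right (t::real). P u \<Longrightarrow> \<exists>u. P u"
  using eventually_happens trivial_limit_at_right_real by blast

lemma tracer_eq:
  assumes rt: "ring_trace n c r f g i s tok" and ts: "t \<ge> s"
  shows "tok t = PP s t i"
proof -
  have tok0: "tok s = i" and pw: "pwc s tok"
    and rule: "\<And>t. t > s \<Longrightarrow> (\<forall>j. AL (leftval tok t) j t \<longrightarrow> tok t = j) \<and>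
            ((\<forall>j. \<not> AL (leftval tok t) j t) \<longrightarrow> tok t = leftval tok t)"
    using rt unfolding ring_trace_def by blast+
  show ?thesis
  proof (rule real_induct_filter[where Q = "\<lambda>t. tok t = PP s t i" and s = s, OF _ _ _ ts])
    show "tok s = PP s s i" using tok0 by (simp add: Pi_refl)
  next
    fix t assume t: "t > s" and ev: "\<forall>\<^sub>F u in at_left t. tok u = PP s u i"
    have "\<forall>\<^sub>F u in at_left t. tok u = PP s u i \<and> tok u = leftval tok t \<and> evs s u = evo s t"
      using ev pwc_left[OF pw t] evs_left[OF t] by eventually_elim auto
    then obtain u where u: "tok u = PP s u i" "tok u = leftval tok t" "evs s u = evo s t"
      using ev_exists_left by blast
    have lv: "leftval tok t = PO s t i" using u by (simp add: PP_def PO_def)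
    have "tok t = sig t (leftval tok t)"
    proof (cases "\<exists>j. AL (leftval tok t) j t")
      case True
      then obtain j where j: "AL (leftval tok t) j t" by blast
      then have "tok t = j" using rule[OF t] by blast
      then show ?thesis using sig_AL[OF j] by simp
    next
      case False
      then have "tok t = leftval tok t" using rule[OF t] by blast
      then show ?thesis using sig_noAL[OF False] by simp
    qed
    then show "tok t = PP s t i" using lv Pi_step[OF t] by simp
  next
    fix t assume t: "t \<ge> s" and q: "tok t = PP s t i"
    show "\<forall>\<^sub>F u in at_right t. tok u = PP s u i"
      using pwc_right[OF pw t] evs_right[OF t] by eventually_elim (use q in \<open>simp add: PP_def\<close>)
  qed
qed

lemma tracer_exists: "ring_trace n c r f g i s (\<lambda>t. PP s t i)"
  unfolding ring_trace_def
proof (intro conjI allI impI)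
  show "PP s s i = i" by (rule Pi_refl)
  have "pwc s (\<lambda>t. (\<lambda>es. FS es i) (evs s t))" by (rule pwc_evs)
  then show "pwc s (\<lambda>t. PP s t i)" by (simp add: PP_def)
next
  fix t j assume t: "s < t"
  have "leftval (\<lambda>t. (\<lambda>es. FS es i) (evs s t)) t = FS (evo s t) i" by (rule leftval_evs[OF t])
  then have lv: "leftval (\<lambda>t. PP s t i) t = PO s t i" by (simp add: PP_def PO_def)
  {
    assume "AL (leftval (\<lambda>t. PP s t i) t) j t"
    then show "PP s t i = j" using lv Pi_step[OF t] sig_AL by simp
  }
next
  fix t assume t: "s < t" and "\<forall>j. \<not> AL (leftval (\<lambda>t. PP s t i) t) j t"
  then show "PP s t i = leftval (\<lambda>t. PP s t i) t"
    using Pi_step[OF t] sig_noAL leftval_evs[OF t, of "\<lambda>es. FS es i"] by (simp add: PP_def PO_def)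
qed

lemma pos_int: assumes "m < n" shows "pos c f g m t = pos c f g m 0 \<longleftrightarrow> t \<in> \<int>"
proof
  assume "pos c f g m t = pos c f g m 0"
  then obtain z where "t = 0 + of_int z" using pos_diff_int[OF assms] by blast
  then show "t \<in> \<int>" by simp
next
  assume "t \<in> \<int>"
  then obtain z where "t = of_int z" by (auto elim: Ints_cases)
  then show "pos c f g m t = pos c f g m 0" using pos_shift[of m 0 z] by simp
qed

definition P1 :: "nat \<Rightarrow> nat" where "P1 = PP 0 1"

lemma P1_inj: "inj P1"
  unfolding P1_def PP_def by (rule injI) (rule FS_inj)

lemma P1_lt: "j < n \<Longrightarrow> P1 j < n"
  unfolding P1_def PP_def by (rule FS_lt)

lemma P1pow_lt: "j < n \<Longrightarrow> (P1 ^^ M) j < n"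
  by (induction M) (auto simp: P1_lt)

lemma PP_nat: "PP 0 (of_nat M) = P1 ^^ M"
proof (induction M)
  case 0 then show ?case by (auto simp: Pi_refl)
next
  case (Suc M)
  have sh: "PP (0 + of_int (int M)) (1 + of_int (int M)) = PP 0 1" by (rule Pi_shift)
  have "PP 0 (of_nat (Suc M)) = (\<lambda>x. PP (of_nat M) (of_nat (Suc M)) (PP 0 (of_nat M) x))"
    by (rule ext, rule Pi_comp) auto
  also have "PP (of_nat M) (of_nat (Suc M)) = P1" using sh by (simp add: P1_def add.commute)
  finally show ?case using Suc by (simp add: comp_def)
qed

lemma PP_int: "PP (of_int z) (of_int z + of_nat M) = P1 ^^ M"
proof -
  have "PP (0 + of_int z) (of_nat M + of_int z) = PP 0 (of_nat M)" by (rule Pi_shift)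
  then show ?thesis using PP_nat by (simp add: add.commute)
qed

definition orb :: "nat \<Rightarrow> nat set" where "orb j = range (\<lambda>M. (P1 ^^ M) j)"

lemma orb_sub: "j < n \<Longrightarrow> orb j \<subseteq> {..<n}"
  unfolding orb_def using P1pow_lt by auto

lemma orb_finite: "j < n \<Longrightarrow> finite (orb j)"
  using orb_sub finite_subset by blast

lemma orb_self: "j \<in> orb j"
  unfolding orb_def by (auto intro: range_eqI[of _ _ 0])

lemma orb_closed: "P1 ` orb j \<subseteq> orb j"
proof
  fix x assume "x \<in> P1 ` orb j"
  then obtain M where "x = P1 ((P1 ^^ M) j)" unfolding orb_def by auto
  then have "x = (P1 ^^ Suc M) j" by simp
  then show "x \<in> orb j" unfolding orb_def by blast
qed

lemma orb_return: assumes "j < n" shows "\<exists>d>0. (P1 ^^ d) j = j"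
proof -
  have "(\<lambda>M. (P1 ^^ M) j) ` {0..n} \<subseteq> {..<n}" using P1pow_lt assms by auto
  then have "card ((\<lambda>M. (P1 ^^ M) j) ` {0..n}) \<le> n" by (metis card_lessThan card_mono finite_lessThan)
  then have "card {0..n} > card ((\<lambda>M. (P1 ^^ M) j) ` {0..n})" by simp
  then have "\<not> inj_on (\<lambda>M. (P1 ^^ M) j) {0..n}" by (rule pigeonhole)
  then obtain a b where ab: "a \<noteq> b" "(P1 ^^ a) j = (P1 ^^ b) j" unfolding inj_on_def by blast
  have key: "(P1 ^^ (y - x)) j = j" if "x < y" "(P1 ^^ x) j = (P1 ^^ y) j" for x y
  proof -
    have e: "(P1 ^^ (x + (y - x))) j = (P1 ^^ x) ((P1 ^^ (y - x)) j)" by (simp only: funpow_add comp_def)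
    have "x + (y - x) = y" using that(1) by simp
    then have "(P1 ^^ x) ((P1 ^^ (y - x)) j) = (P1 ^^ y) j" using e by simp
    then have "(P1 ^^ x) ((P1 ^^ (y - x)) j) = (P1 ^^ x) j" using that(2) by simp
    then show ?thesis using inj_fn[OF P1_inj, of x] by (simp add: inj_def)
  qed
  show ?thesis
  proof (cases "a < b")
    case True then show ?thesis using key[OF True ab(2)] by (intro exI[of _ "b - a"]) simp
  next
    case False then have "b < a" using ab(1) by simp
    then show ?thesis using key[OF \<open>b < a\<close> ab(2)[symmetric]] by (intro exI[of _ "a - b"]) simp
  qed
qed

lemma orb_back: assumes "j < n" "a \<in> orb j" shows "\<exists>N\<ge>B. (P1 ^^ N) a = j"
proof -
  obtain M where a: "a = (P1 ^^ M) j" using assms(2) unfolding orb_def by auto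
  obtain d where d: "d > 0" "(P1 ^^ d) j = j" using orb_return[OF assms(1)] by blast
  have dq: "(P1 ^^ (d * q)) j = j" for q
  proof (induction q)
    case 0 then show ?case by simp
  next
    case (Suc q)
    have e: "(P1 ^^ (d + d * q)) j = (P1 ^^ d) ((P1 ^^ (d * q)) j)" by (simp only: funpow_add comp_def)
    have "d * Suc q = d + d * q" by simp
    then have "(P1 ^^ (d * Suc q)) j = (P1 ^^ d) ((P1 ^^ (d * q)) j)" using e by simp
    then show ?case using Suc d(2) by simp
  qed
  define q where "q = B + M + 1"
  have "d * q \<ge> q" using d(1) by simp
  define N where "N = d * q - M"
  have NM: "N + M = d * q" using \<open>d * q \<ge> q\<close> by (simp add: N_def q_def)
  have "(P1 ^^ N) a = (P1 ^^ (N + M)) j" by (simp add: a funpow_add comp_def)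
  also have "\<dots> = j" using NM dq by simp
  finally show ?thesis using \<open>d * q \<ge> q\<close> by (intro exI[of _ N]) (simp add: N_def q_def)
qed

lemma robots_ring:
  assumes rt: "ring_trace n c r f g i s tok" and i: "i < n"
  shows "robots_in_ring n c f g (ring_points c f g s tok) = orb (PP s (of_int \<lceil>s\<rceil>) i)"
proof -
  define z0 where "z0 = \<lceil>s\<rceil>"
  define j0 where "j0 = PP s (of_int z0) i"
  have sz: "s \<le> of_int z0" unfolding z0_def by simp
  have tokint: "tok (of_int z0 + of_nat M) = (P1 ^^ M) j0" for M
  proof -
    have "tok (of_int z0 + of_nat M) = PP s (of_int z0 + of_nat M) i"
      using tracer_eq[OF rt] sz by simp
    also have "\<dots> = PP (of_int z0) (of_int z0 + of_nat M) j0"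
      unfolding j0_def by (rule Pi_comp) (use sz in auto)
    also have "\<dots> = (P1 ^^ M) j0" by (simp add: PP_int)
    finally show ?thesis .
  qed
  have j0n: "j0 < n" unfolding j0_def PP_def using i by (rule FS_lt)
  show ?thesis
  proof (intro equalityI subsetI)
    fix m assume "m \<in> robots_in_ring n c f g (ring_points c f g s tok)"
    then obtain t where t: "m < n" "t \<ge> s" "m = tok t" "pos c f g m 0 = pos c f g (tok t) t"
      unfolding robots_in_ring_def ring_points_def by auto
    have "pos c f g m t = pos c f g m 0" using t(3,4) by simp
    then have "t \<in> \<int>" using pos_int[OF t(1)] by blast
    then obtain w where w: "t = of_int w" by (auto elim: Ints_cases)
    have "w \<ge> z0" using t(2) w unfolding z0_def by (simp add: ceiling_le_iff)
    then have "t = of_int z0 + of_nat (nat (w - z0))" using w by simp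
    then have "m = (P1 ^^ nat (w - z0)) j0" using t(3) tokint by simp
    then show "m \<in> orb (PP s (of_int \<lceil>s\<rceil>) i)" unfolding orb_def j0_def z0_def by blast
  next
    fix m assume "m \<in> orb (PP s (of_int \<lceil>s\<rceil>) i)"
    then obtain M where m: "m = (P1 ^^ M) j0" unfolding orb_def j0_def z0_def by auto
    define t where "t = of_int z0 + (of_nat M :: real)"
    have "t \<ge> s" using sz by (simp add: t_def)
    moreover have "tok t = m" using tokint m by (simp add: t_def)
    moreover have "m < n" using m P1pow_lt j0n by simp
    moreover have "pos c f g m t = pos c f g m 0"
      using pos_int[OF \<open>m < n\<close>] by (simp add: t_def)
    ultimately show "m \<in> robots_in_ring n c f g (ring_points c f g s tok)"
      unfolding robots_in_ring_def ring_points_def by force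
  qed
qed

end

context scs begin

lemma run_pwc: "scs_run n c r f g L tau loc \<Longrightarrow> m < n \<Longrightarrow> pwc 0 (loc m)"
  unfolding scs_run_def by blast

lemma run_none: "scs_run n c r f g L tau loc \<Longrightarrow> m < n \<Longrightarrow> t \<ge> 0 \<Longrightarrow>
    loc m t = None \<longleftrightarrow> (m \<in> L \<and> tau m \<le> t)"
  unfolding scs_run_def by blast

lemma run_init: "scs_run n c r f g L tau loc \<Longrightarrow> m < n \<Longrightarrow> \<not> (m \<in> L \<and> tau m \<le> 0) \<Longrightarrow> loc m 0 = Some m"
  unfolding scs_run_def by blast

lemma run_step: "scs_run n c r f g L tau loc \<Longrightarrow> m < n \<Longrightarrow> t > 0 \<Longrightarrow> loc m t \<noteq> None \<Longrightarrow>
    leftval (loc m) t = Some i \<Longrightarrow>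
    (\<forall>j. AL i j t \<and> \<not> occupied_before n loc j t \<longrightarrow> loc m t = Some j) \<and>
    ((\<forall>j. \<not> (AL i j t \<and> \<not> occupied_before n loc j t)) \<longrightarrow> loc m t = Some i)"
  unfolding scs_run_def by blast

lemma scs_rule:
  assumes run: "scs_run n c r f g L tau loc" and "m < n" "t > 0" "loc m t \<noteq> None"
    and lv: "leftval (loc m) t = Some i"
  shows "loc m t = Some (if sig t i \<notin> {j. occupied_before n loc j t} then sig t i else i)"
proof -
  note R = run_step[OF assms]
  show ?thesis
  proof (cases "\<exists>j. AL i j t")
    case True
    then obtain j where j: "AL i j t" by blast
    have sj: "sig t i = j" using sig_AL[OF j] .
    show ?thesis
    proof (cases "occupied_before n loc j t")
      case True
      have "\<forall>j'. \<not> (AL i j' t \<and> \<not> occupied_before n loc j' t)"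
        using True AL_uniq[OF j] by blast
      then have "loc m t = Some i" using R by blast
      then show ?thesis using sj True by simp
    next
      case False
      then have "loc m t = Some j" using R j by blast
      then show ?thesis using sj False by simp
    qed
  next
    case False
    then have "sig t i = i" by (rule sig_noAL)
    moreover have "loc m t = Some i" using R False by blast
    ultimately show ?thesis by simp
  qed
qed

lemma pos_surj:
  assumes i: "i < n" and p: "cmod (p - c i) = 1"
  shows "\<exists>t\<ge>0. pos c f g i t = p"
proof -
  define w where "w = p - c i"
  have w0: "w \<noteq> 0" using p w_def by auto
  have cw: "cis (Arg w) = w" using cis_Arg[OF w0] p by (simp add: sgn_div_norm w_def)
  define t1 where "t1 = (Arg w - f i) / (real_of_int (g i) * 2 * pi)"
  have "real_of_int (g i) * 2 * pi * t1 = Arg w - f i"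
    using gpm[OF i] by (auto simp: t1_def)
  then have "pos c f g i t1 = p" unfolding pos_def using cw w_def by simp
  define t where "t = t1 + of_int (- \<lfloor>t1\<rfloor>)"
  have "t \<ge> 0" unfolding t_def by linarith
  moreover have "pos c f g i t = p" unfolding t_def pos_shift by fact
  ultimately show ?thesis by blast
qed

lemma run_inv:
  assumes run: "scs_run n c r f g L tau loc" and t: "t \<ge> 0"
  shows "(\<forall>m<n. \<forall>i. loc m t = Some i \<longrightarrow> i < n) \<and>
         (\<forall>m<n. \<forall>m'<n. loc m t = loc m' t \<longrightarrow> loc m t \<noteq> None \<longrightarrow> m = m')"
proof (rule real_induct_filter[where s = 0, OF _ _ _ t])
  have l0: "loc m 0 = (if m \<in> L \<and> tau m \<le> 0 then None else Some m)" if "m < n" for m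
    using run_none[OF run that, of 0] run_init[OF run that] by auto
  show "(\<forall>m<n. \<forall>i. loc m 0 = Some i \<longrightarrow> i < n) \<and>
         (\<forall>m<n. \<forall>m'<n. loc m 0 = loc m' 0 \<longrightarrow> loc m 0 \<noteq> None \<longrightarrow> m = m')"
  proof (intro conjI allI impI)
    fix m i assume "m < n" "loc m 0 = Some i"
    then show "i < n" using l0[of m] by (auto split: if_splits)
  next
    fix m m' assume "m < n" "m' < n" "loc m 0 = loc m' 0" "loc m 0 \<noteq> None"
    then show "m = m'" using l0[of m] l0[of m'] by (auto split: if_splits)
  qed
next
  fix t :: real assume t: "t > 0"
  assume ev: "\<forall>\<^sub>F u in at_left t. (\<forall>m<n. \<forall>i. loc m u = Some i \<longrightarrow> i < n) \<and>
         (\<forall>m<n. \<forall>m'<n. loc m u = loc m' u \<longrightarrow> loc m u \<noteq> None \<longrightarrow> m = m')"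
  have evl: "\<forall>\<^sub>F u in at_left t. \<forall>m\<in>{..<n}. loc m u = leftval (loc m) t"
    by (rule eventually_ball_finite) (use pwc_left[OF run_pwc[OF run] t] in auto)
  have evp: "\<forall>\<^sub>F u in at_left t. u \<in> {0<..<t}" by (rule eventually_at_left_real[OF t])
  obtain u where uu: "((\<forall>m<n. \<forall>i. loc m u = Some i \<longrightarrow> i < n) \<and>
         (\<forall>m<n. \<forall>m'<n. loc m u = loc m' u \<longrightarrow> loc m u \<noteq> None \<longrightarrow> m = m')) \<and>
         (\<forall>m\<in>{..<n}. loc m u = leftval (loc m) t) \<and> u \<in> {0<..<t}"
    using ev_exists_left[OF eventually_conj[OF ev eventually_conj[OF evl evp]]] by (elim exE)
  have u1: "\<forall>m<n. \<forall>i. loc m u = Some i \<longrightarrow> i < n" using uu by (rule conjunct1[OF conjunct1])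
  have u2: "\<forall>m<n. \<forall>m'<n. loc m u = loc m' u \<longrightarrow> loc m u \<noteq> None \<longrightarrow> m = m'"
    using uu by (rule conjunct2[OF conjunct1])
  have u3: "\<forall>m\<in>{..<n}. loc m u = leftval (loc m) t" using uu by (rule conjunct1[OF conjunct2])
  have u4: "0 < u" "u < t" using uu by auto
  define Occ where "Occ = {j. occupied_before n loc j t}"
  define F where "F = (\<lambda>x. if sig t x \<notin> Occ then sig t x else x)"
  have alive: "\<exists>i. leftval (loc m) t = Some i \<and> i < n \<and> i \<in> Occ \<and> loc m t = Some (F i)"
    if m: "m < n" "loc m t \<noteq> None" for m
  proof -
    have "\<not> (m \<in> L \<and> tau m \<le> t)" using run_none[OF run m(1), of t] t m(2) by simp
    then have "\<not> (m \<in> L \<and> tau m \<le> u)" using u4 by auto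
    then have "loc m u \<noteq> None" using run_none[OF run m(1), of u] u4 by simp
    then obtain i where i: "loc m u = Some i" by blast
    have lv: "leftval (loc m) t = Some i" using i u3 m(1) by simp
    have "i < n" using u1 i m(1) by blast
    moreover have "i \<in> Occ" using lv m(1) unfolding Occ_def occupied_before_def by blast
    moreover have "loc m t = Some (F i)" using scs_rule[OF run m(1) t m(2) lv] unfolding F_def Occ_def .
    ultimately show ?thesis using lv by blast
  qed
  show "(\<forall>m<n. \<forall>i. loc m t = Some i \<longrightarrow> i < n) \<and>
         (\<forall>m<n. \<forall>m'<n. loc m t = loc m' t \<longrightarrow> loc m t \<noteq> None \<longrightarrow> m = m')"
  proof (intro conjI allI impI)
    fix m x assume m: "m < n" "loc m t = Some x"
    then obtain i where i: "i < n" "loc m t = Some (F i)" using alive by blast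
    then have "x = F i" using m by simp
    then show "x < n" using i(1) sig_lt by (simp add: F_def)
  next
    fix m m' assume m: "m < n" "m' < n" "loc m t = loc m' t" "loc m t \<noteq> None"
    obtain i where i: "leftval (loc m) t = Some i" "i \<in> Occ" "loc m t = Some (F i)"
      using alive[OF m(1) m(4)] by blast
    obtain i' where i': "leftval (loc m') t = Some i'" "i' \<in> Occ" "loc m' t = Some (F i')"
    proof -
      have "loc m' t \<noteq> None" using m(3,4) by simp
      from alive[OF m(2) this] show ?thesis using that by blast
    qed
    have "F i = F i'" using i(3) i'(3) m(3) by simp
    moreover have "inj_on F Occ" unfolding F_def by (rule involution_image(2)) (rule sig_invol)
    ultimately have "i = i'" using i(2) i'(2) by (simp add: inj_on_def)
    then have "loc m u = loc m' u" using i(1) i'(1) u3 m(1,2) by simp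
    moreover have "loc m u \<noteq> None" using i(1) u3 m(1) by simp
    ultimately show "m = m'" using u2 m(1,2) by blast
  qed
next
  fix t :: real assume t: "t \<ge> 0"
  assume q: "(\<forall>m<n. \<forall>i. loc m t = Some i \<longrightarrow> i < n) \<and>
         (\<forall>m<n. \<forall>m'<n. loc m t = loc m' t \<longrightarrow> loc m t \<noteq> None \<longrightarrow> m = m')"
  have evr: "\<forall>\<^sub>F u in at_right t. \<forall>m\<in>{..<n}. loc m u = loc m t"
    by (rule eventually_ball_finite) (use pwc_right[OF run_pwc[OF run] t] in auto)
  then show "\<forall>\<^sub>F u in at_right t. (\<forall>m<n. \<forall>i. loc m u = Some i \<longrightarrow> i < n) \<and>
         (\<forall>m<n. \<forall>m'<n. loc m u = loc m' u \<longrightarrow> loc m u \<noteq> None \<longrightarrow> m = m')"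
  proof eventually_elim
    case (elim u)
    then have e: "\<And>m. m < n \<Longrightarrow> loc m u = loc m t" by auto
    show ?case
    proof (intro conjI allI impI)
      fix m i assume "m < n" "loc m u = Some i"
      then have "loc m t = Some i" using e by metis
      then show "i < n" using q \<open>m < n\<close> by blast
    next
      fix m m' assume mm: "m < n" "m' < n" "loc m u = loc m' u" "loc m u \<noteq> None"
      then have "loc m t = loc m' t" "loc m t \<noteq> None" using e by metis+
      then show "m = m'" using q mm(1,2) by blast
    qed
  qed
qed

lemma resil:
  fixes K :: nat
  assumes Kge: "\<forall>m<n. K \<le> card (orb m)" and K1: "K \<ge> 1"
  shows "resilient n c r f g (K - 1)"
  unfolding resilient_def
proof (intro allI impI, elim conjE)
  fix L tau loc
  assume Ln: "L \<subseteq> {..<n}" and cL: "card L \<le> K - 1" and tau0: "\<forall>m. 0 \<le> tau m"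
    and run: "scs_run n c r f g L tau loc"
  define Oc where "Oc t = {i. \<exists>m<n. loc m t = Some i}" for t
  have finL: "finite L" using Ln finite_subset by blast
  define T0 where "T0 = Max (insert 0 (tau ` L))"
  have T00: "T0 \<ge> 0" unfolding T0_def using finL by simp
  have tauT: "tau m \<le> T0" if "m \<in> L" for m unfolding T0_def using finL that by simp
  have aliveT: "loc m t = None \<longleftrightarrow> m \<in> L" if "m < n" "t \<ge> T0" for m t
    using run_none[OF run that(1), of t] that T00 tauT by force
  have invT: "(\<forall>m<n. \<forall>i. loc m T0 = Some i \<longrightarrow> i < n) \<and>
         (\<forall>m<n. \<forall>m'<n. loc m T0 = loc m' T0 \<longrightarrow> loc m T0 \<noteq> None \<longrightarrow> m = m')"
    by (rule run_inv[OF run T00])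
  have OT_sub: "Oc T0 \<subseteq> {..<n}" unfolding Oc_def using invT by blast
  have OT_img: "Oc T0 = (\<lambda>m. the (loc m T0)) ` ({..<n} - L)"
  proof (intro equalityI subsetI)
    fix i assume "i \<in> Oc T0"
    then obtain m where m: "m < n" "loc m T0 = Some i" unfolding Oc_def by blast
    then have "m \<notin> L" using aliveT[OF m(1), of T0] by simp
    then show "i \<in> (\<lambda>m. the (loc m T0)) ` ({..<n} - L)" using m by force
  next
    fix i assume "i \<in> (\<lambda>m. the (loc m T0)) ` ({..<n} - L)"
    then obtain m where m: "m < n" "m \<notin> L" "i = the (loc m T0)" by blast
    then have "loc m T0 \<noteq> None" using aliveT[OF m(1), of T0] by simp
    then have "loc m T0 = Some i" using m(3) by auto
    then show "i \<in> Oc T0" unfolding Oc_def using m(1) by blast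
  qed
  have inj1: "inj_on (\<lambda>m. the (loc m T0)) ({..<n} - L)"
  proof (rule inj_onI)
    fix m m' assume mm: "m \<in> {..<n} - L" "m' \<in> {..<n} - L" "the (loc m T0) = the (loc m' T0)"
    have a: "loc m T0 \<noteq> None" "loc m' T0 \<noteq> None" using mm(1,2) aliveT[of _ T0] by auto
    then have "loc m T0 = loc m' T0" using mm(3) by auto
    then show "m = m'" using invT a mm(1,2) by blast
  qed
  have cardOT: "card (Oc T0) = n - card L"
    using OT_img card_image[OF inj1] card_Diff_subset[OF finL Ln] by simp
  define Ps where "Ps = {a. a < n \<and> PP 0 T0 a \<in> Oc T0}"
  have inj2: "inj_on (PP 0 T0) Ps" by (rule inj_onI) (simp add: PP_def FS_inj)
  have imgPs: "PP 0 T0 ` Ps = Oc T0"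
  proof (intro equalityI subsetI)
    fix x assume "x \<in> PP 0 T0 ` Ps" then show "x \<in> Oc T0" unfolding Ps_def by blast
  next
    fix x assume x: "x \<in> Oc T0"
    then have "x < n" using OT_sub by blast
    then obtain a where "a < n" "FS (evs 0 T0) a = x" using FS_surj by blast
    then show "x \<in> PP 0 T0 ` Ps" unfolding Ps_def PP_def using x by blast
  qed
  have cardPs: "card Ps = n - card L" using card_image[OF inj2] imgPs cardOT by simp
  have Ps_sub: "Ps \<subseteq> {..<n}" unfolding Ps_def by blast
  have occ: "Oc t = PP 0 t ` Ps" if tT: "t \<ge> T0" for t
  proof (rule real_induct_filter[where s = T0 and Q = "\<lambda>t. Oc t = PP 0 t ` Ps", OF _ _ _ tT])
    show "Oc T0 = PP 0 T0 ` Ps" using imgPs by simp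
  next
    fix t assume t: "t > T0" and ev: "\<forall>\<^sub>F u in at_left t. Oc u = PP 0 u ` Ps"
    have t0: "t > 0" using t T00 by simp
    have evl: "\<forall>\<^sub>F u in at_left t. \<forall>m\<in>{..<n}. loc m u = leftval (loc m) t"
      by (rule eventually_ball_finite) (use pwc_left[OF run_pwc[OF run] t0] in auto)
    have evp: "\<forall>\<^sub>F u in at_left t. u \<in> {T0<..<t}" by (rule eventually_at_left_real[OF t])
    obtain u where uu: "Oc u = PP 0 u ` Ps \<and> evs 0 u = evo 0 t \<and>
         (\<forall>m\<in>{..<n}. loc m u = leftval (loc m) t) \<and> u \<in> {T0<..<t}"
      using ev_exists_left[OF eventually_conj[OF ev eventually_conj[OF evs_left[OF t0] eventually_conj[OF evl evp]]]]
      by (elim exE)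
    have u1: "Oc u = PP 0 u ` Ps" using uu by blast
    have u2: "evs 0 u = evo 0 t" using uu by blast
    have u3: "\<And>m. m < n \<Longrightarrow> loc m u = leftval (loc m) t" using uu by blast
    have u4: "T0 < u" using uu by auto
    define Olv where "Olv = {i. \<exists>m<n. leftval (loc m) t = Some i}"
    have OlvOu: "Olv = Oc u" unfolding Olv_def Oc_def using u3 by auto
    have Olv: "Olv = PO 0 t ` Ps" using OlvOu u1 u2 by (simp add: PP_def PO_def)
    have Occ: "{j. occupied_before n loc j t} = Olv" unfolding Olv_def occupied_before_def by blast
    define F where "F = (\<lambda>x. if sig t x \<notin> Olv then sig t x else x)"
    have step: "leftval (loc m) t = Some x \<Longrightarrow> loc m t = Some (F x)" if m: "m < n" for m x
    proof -
      assume lv: "leftval (loc m) t = Some x"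
      then have "loc m u \<noteq> None" using u3[OF m] by simp
      then have "m \<notin> L" using aliveT[OF m, of u] u4 by simp
      then have "loc m t \<noteq> None" using aliveT[OF m, of t] t by simp
      from scs_rule[OF run m t0 this lv] show ?thesis unfolding F_def Occ .
    qed
    have "Oc t = F ` Olv"
    proof (intro equalityI subsetI)
      fix i assume "i \<in> Oc t"
      then obtain m where m: "m < n" "loc m t = Some i" unfolding Oc_def by blast
      then have "m \<notin> L" using aliveT[OF m(1), of t] t by simp
      then have "loc m u \<noteq> None" using aliveT[OF m(1), of u] u4 by simp
      then obtain x where x: "leftval (loc m) t = Some x" using u3[OF m(1)] by auto
      then have "x \<in> Olv" unfolding Olv_def using m(1) by blast
      moreover have "i = F x" using step[OF m(1) x] m(2) by simp
      ultimately show "i \<in> F ` Olv" by blast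
    next
      fix i assume "i \<in> F ` Olv"
      then obtain x m where x: "i = F x" "m < n" "leftval (loc m) t = Some x" unfolding Olv_def by blast
      then have "loc m t = Some i" using step by simp
      then show "i \<in> Oc t" unfolding Oc_def using x(2) by blast
    qed
    also have "\<dots> = sig t ` Olv" unfolding F_def by (rule involution_image(1)) (rule sig_invol)
    also have "\<dots> = (\<lambda>a. sig t (PO 0 t a)) ` Ps" using Olv by auto
    also have "\<dots> = PP 0 t ` Ps" using Pi_step[OF t0] by simp
    finally show "Oc t = PP 0 t ` Ps" .
  next
    fix t assume t: "t \<ge> T0" and q: "Oc t = PP 0 t ` Ps"
    have t0: "t \<ge> 0" using t T00 by simp
    have evr: "\<forall>\<^sub>F u in at_right t. \<forall>m\<in>{..<n}. loc m u = loc m t"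
      by (rule eventually_ball_finite) (use pwc_right[OF run_pwc[OF run] t0] in auto)
    from eventually_conj[OF evr evs_right[OF t0]]
    show "\<forall>\<^sub>F u in at_right t. Oc u = PP 0 u ` Ps"
    proof eventually_elim
      case (elim u)
      then have "Oc u = Oc t" unfolding Oc_def by auto
      moreover have "PP 0 u = PP 0 t" using elim by (simp add: PP_def)
      ultimately show ?case using q by simp
    qed
  qed
  show "covered n c f g loc"
    unfolding covered_def
  proof (intro allI impI)
    fix i p T assume i: "i < n" and p: "cmod (p - c i) = 1"
    obtain tp where tp: "tp \<ge> 0" "pos c f g i tp = p" using pos_surj[OF i p] by blast
    obtain j0 where j0: "j0 < n" "FS (evs 0 tp) j0 = i" using FS_surj[OF i] by blast
    have cardorb: "K \<le> card (orb j0)" using Kge j0(1) by blast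
    have "orb j0 \<inter> Ps \<noteq> {}"
    proof
      assume dis: "orb j0 \<inter> Ps = {}"
      have "card (orb j0 \<union> Ps) = card (orb j0) + card Ps"
        using dis orb_finite[OF j0(1)] finite_subset[OF Ps_sub] by (simp add: card_Un_disjoint)
      moreover have "card (orb j0 \<union> Ps) \<le> n"
        using orb_sub[OF j0(1)] Ps_sub by (metis card_lessThan card_mono finite_lessThan Un_least)
      moreover have "card L \<le> n" using Ln by (metis card_lessThan card_mono finite_lessThan)
      ultimately show False using cardorb cardPs cL K1 by linarith
    qed
    then obtain a where a: "a \<in> orb j0" "a \<in> Ps" by blast
    obtain N where N: "N \<ge> nat \<lceil>\<bar>T\<bar> + T0\<rceil>" "(P1 ^^ N) a = j0" using orb_back[OF j0(1) a(1)] by blast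
    define t where "t = tp + of_nat N"
    have NT: "real N \<ge> \<bar>T\<bar> + T0" using N(1) by linarith
    have tT: "t \<ge> T" "t \<ge> T0" using NT tp(1) T00 unfolding t_def by linarith+
    have "PP 0 t a = PP (of_nat N) t (PP 0 (of_nat N) a)"
      by (rule Pi_comp) (use tp(1) in \<open>auto simp: t_def\<close>)
    also have "PP 0 (of_nat N) a = j0" using N(2) PP_nat by simp
    also have "PP (of_nat N) t = PP (0 + of_int (int N)) (tp + of_int (int N))" by (simp add: t_def)
    also have "\<dots> = PP 0 tp" by (rule Pi_shift)
    finally have "PP 0 t a = i" using j0(2) by (simp add: PP_def)
    then have "i \<in> Oc t" using occ[OF tT(2)] a(2) by blast
    then obtain m where m: "m < n" "loc m t = Some i" unfolding Oc_def by blast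
    have "pos c f g i t = p" using pos_shift[of i tp "int N"] tp(2) by (simp add: t_def)
    then show "\<exists>t\<ge>T. \<exists>m<n. loc m t = Some i \<and> pos c f g i t = p" using m tT(1) by blast
  qed
qed

end

context scs begin

definition stB :: "nat set \<Rightarrow> real \<Rightarrow> (nat \<Rightarrow> nat) \<times> (nat \<Rightarrow> nat) \<Rightarrow> (nat \<Rightarrow> nat) \<times> (nat \<Rightarrow> nat)" where
  "stB C e st = (\<lambda>x. sig e (fst st x),
     \<lambda>m. if sig e (snd st m) \<in> fst st ` C then sig e (snd st m) else snd st m)"

definition fB :: "nat set \<Rightarrow> real list \<Rightarrow> (nat \<Rightarrow> nat) \<times> (nat \<Rightarrow> nat)" where
  "fB C es = foldl (\<lambda>st e. stB C e st) (id, id) es"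

lemma fst_fold: "fst (foldl (\<lambda>st e. stB C e st) st0 es) = (\<lambda>i. FS es (fst st0 i))"
proof (induction es arbitrary: st0)
  case Nil then show ?case by (simp add: FS_Nil)
next
  case (Cons e es)
  have "fst (foldl (\<lambda>st e. stB C e st) st0 (e # es)) = fst (foldl (\<lambda>st e. stB C e st) (stB C e st0) es)" by simp
  also have "\<dots> = (\<lambda>i. FS es (fst (stB C e st0) i))" by (rule Cons.IH)
  also have "\<dots> = (\<lambda>i. FS (e # es) (fst st0 i))" by (simp add: stB_def FS_Cons)
  finally show ?case .
qed

lemma fst_fB: "fst (fB C es) = FS es"
  unfolding fB_def using fst_fold[of C "(id, id)" es] by simp

lemma fB_snoc: "fB C (es @ [e]) = stB C e (fB C es)"
  by (simp add: fB_def)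

lemma FS_C_compl:
  assumes "C \<subseteq> {..<n}"
  shows "FS es ` C = {..<n} - FS es ` ({..<n} - C)"
proof -
  have inj: "inj (FS es)" by (rule injI) (rule FS_inj)
  have "FS es ` C \<union> FS es ` ({..<n} - C) = FS es ` {..<n}" using assms by (auto simp flip: image_Un)
  also have "\<dots> = {..<n}" by (rule FS_image)
  finally have u: "FS es ` C \<union> FS es ` ({..<n} - C) = {..<n}" .
  have d: "FS es ` C \<inter> FS es ` ({..<n} - C) = {}" using inj by (auto simp: inj_def)
  from u d show ?thesis by blast
qed

lemma fB_inv:
  assumes C: "C \<subseteq> {..<n}"
  shows "snd (fB C es) ` ({..<n} - C) = FS es ` ({..<n} - C) \<and> inj_on (snd (fB C es)) ({..<n} - C)"
proof (induction es rule: rev_induct)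
  case Nil then show ?case by (simp add: fB_def FS_Nil)
next
  case (snoc e es)
  define X where "X = snd (fB C es)"
  define p where "p = FS es"
  define Oc where "Oc = p ` ({..<n} - C)"
  define G where "G = (\<lambda>x. if sig e x \<in> p ` C then sig e x else x)"
  define H where "H = (\<lambda>x. if sig e x \<notin> Oc then sig e x else x)"
  have IH1: "X ` ({..<n} - C) = Oc" and IH2: "inj_on X ({..<n} - C)"
    using snoc unfolding X_def Oc_def p_def by auto
  have pC: "p ` C = {..<n} - Oc" unfolding p_def Oc_def by (rule FS_C_compl[OF C])
  have Oc_sub: "Oc \<subseteq> {..<n}" unfolding Oc_def p_def using FS_lt by blast
  have GH: "G x = H x" if "x \<in> Oc" for x
  proof -
    have "sig e x < n" using that Oc_sub sig_lt by blast
    then show ?thesis unfolding G_def H_def pC by simp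
  qed
  have fst_st: "fst (fB C es) = p" unfolding p_def by (rule fst_fB)
  have snd_new: "snd (fB C (es @ [e])) = (\<lambda>m. G (X m))"
    by (simp add: fB_snoc stB_def G_def X_def fst_st)
  have fst_new: "FS (es @ [e]) = (\<lambda>x. sig e (p x))"
    by (rule ext) (simp add: FS_append FS_def p_def)
  have "snd (fB C (es @ [e])) ` ({..<n} - C) = G ` Oc"
    unfolding snd_new using IH1 by (auto simp: image_image[symmetric])
  also have "\<dots> = H ` Oc" using GH by (rule image_cong[OF refl])
  also have "\<dots> = sig e ` Oc" unfolding H_def by (rule involution_image(1)) (rule sig_invol)
  also have "\<dots> = FS (es @ [e]) ` ({..<n} - C)" unfolding fst_new Oc_def by (simp add: image_image)
  finally have A: "snd (fB C (es @ [e])) ` ({..<n} - C) = FS (es @ [e]) ` ({..<n} - C)" .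
  have injH: "inj_on H Oc" unfolding H_def by (rule involution_image(2)) (rule sig_invol)
  have injG: "inj_on G Oc" using injH GH by (simp add: inj_on_def)
  have "inj_on (\<lambda>m. G (X m)) ({..<n} - C)"
    using comp_inj_on[OF IH2, of G] injG IH1 by (simp add: comp_def)
  then show ?case using A snd_new by simp
qed

definition locB :: "nat set \<Rightarrow> nat \<Rightarrow> real \<Rightarrow> nat option" where
  "locB C m t = (if m \<in> C then None else Some (snd (fB C (evs 0 t)) m))"

lemma locB_evs: "locB C m = (\<lambda>t. (\<lambda>es. if m \<in> C then None else Some (snd (fB C es) m)) (evs 0 t))"
  by (rule ext) (simp add: locB_def)

lemma leftval_locB: "t > 0 \<Longrightarrow> leftval (locB C m) t = (if m \<in> C then None else Some (snd (fB C (evo 0 t)) m))"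
  unfolding locB_evs by (rule leftval_evs)

lemma locB_step:
  assumes C: "C \<subseteq> {..<n}" and m: "m < n" and t: "0 < t" and al: "locB C m t \<noteq> None"
    and lv: "leftval (locB C m) t = Some i"
  shows "(\<forall>j. AL i j t \<and> \<not> occupied_before n (locB C) j t \<longrightarrow> locB C m t = Some j) \<and>
    ((\<forall>j. \<not> (AL i j t \<and> \<not> occupied_before n (locB C) j t)) \<longrightarrow> locB C m t = Some i)"
proof (intro conjI)
  have mC: "m \<notin> C" using al by (simp add: locB_def split: if_splits)
  define X where "X = snd (fB C (evo 0 t))"
  define p where "p = FS (evo 0 t)"
  have iX: "i = X m" using lv leftval_locB[OF t, of C m] mC by (simp add: X_def)
  have inv: "X ` ({..<n} - C) = p ` ({..<n} - C)" using fB_inv[OF C] unfolding X_def p_def by blast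
  have occ: "occupied_before n (locB C) j t \<longleftrightarrow> j \<in> X ` ({..<n} - C)" for j
  proof
    assume "occupied_before n (locB C) j t"
    then obtain m' where m': "m' < n" "leftval (locB C m') t = Some j" unfolding occupied_before_def by blast
    then have "m' \<notin> C" "X m' = j" using leftval_locB[OF t, of C m'] by (auto simp: X_def split: if_splits)
    then show "j \<in> X ` ({..<n} - C)" using m'(1) by blast
  next
    assume "j \<in> X ` ({..<n} - C)"
    then obtain m' where m': "m' < n" "m' \<notin> C" "j = X m'" by blast
    then have "leftval (locB C m') t = Some j" using leftval_locB[OF t, of C m'] by (simp add: X_def)
    then show "occupied_before n (locB C) j t" unfolding occupied_before_def using m'(1) by blast
  qed
  have pC: "p ` C = {..<n} - p ` ({..<n} - C)" unfolding p_def by (rule FS_C_compl[OF C])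
  have fstp: "fst (fB C (evo 0 t)) = p" unfolding p_def by (rule fst_fB)
  have locnew: "locB C m t = Some (if t \<in> Ev then (if sig t i \<in> p ` C then sig t i else i) else i)"
  proof (cases "t \<in> Ev")
    case True
    then have "evs 0 t = evo 0 t @ [t]" using evs_split[OF t] by simp
    then have "locB C m t = Some (snd (stB C t (fB C (evo 0 t))) m)"
      using mC by (simp add: locB_def fB_snoc)
    also have "\<dots> = Some (if sig t i \<in> p ` C then sig t i else i)"
      unfolding stB_def fstp by (simp add: iX X_def)
    finally show ?thesis using True by simp
  next
    case False
    then have "evs 0 t = evo 0 t" using evs_split[OF t] by simp
    then show ?thesis using mC False by (simp add: locB_def iX X_def)
  qed
  have "X m \<in> X ` ({..<n} - C)" using mC m by blast
  then have "X m \<in> p ` ({..<n} - C)" unfolding inv[symmetric] .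
  then obtain a where "a < n" "X m = p a" by blast
  then have ilt: "i < n" by (simp add: iX p_def FS_lt)
  show "\<forall>j. AL i j t \<and> \<not> occupied_before n (locB C) j t \<longrightarrow> locB C m t = Some j"
  proof (intro allI impI)
    fix j assume j: "AL i j t \<and> \<not> occupied_before n (locB C) j t"
    have tE: "t \<in> Ev" using j unfolding Ev_def by blast
    have sj: "sig t i = j" using sig_AL j by blast
    have "j < n" using AL_lt j by blast
    have "j \<notin> X ` ({..<n} - C)" using j occ by blast
    then have "j \<notin> p ` ({..<n} - C)" unfolding inv[symmetric] .
    then have "j \<in> p ` C" using pC \<open>j < n\<close> by blast
    then show "locB C m t = Some j" using locnew tE sj by simp
  qed
  show "(\<forall>j. \<not> (AL i j t \<and> \<not> occupied_before n (locB C) j t)) \<longrightarrow> locB C m t = Some i"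
  proof
    assume nj: "\<forall>j. \<not> (AL i j t \<and> \<not> occupied_before n (locB C) j t)"
    show "locB C m t = Some i"
    proof (cases "\<exists>j. AL i j t")
      case True
      then obtain j where j: "AL i j t" by blast
      have "occupied_before n (locB C) j t" using nj j by blast
      then have "j \<in> X ` ({..<n} - C)" using occ by blast
      then have "j \<in> p ` ({..<n} - C)" unfolding inv[symmetric] .
      then have "j \<notin> p ` C" using pC by blast
      then show ?thesis using locnew sig_AL[OF j] by simp
    next
      case False
      then have "sig t i = i" by (rule sig_noAL)
      then show ?thesis using locnew by simp
    qed
  qed
qed

lemma locB_run:
  assumes C: "C \<subseteq> {..<n}"
  shows "scs_run n c r f g C (\<lambda>_. 0) (locB C)"
  unfolding scs_run_def
proof (intro allI impI conjI)
  fix m assume m: "m < n"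
  show "pwc 0 (locB C m)" unfolding locB_evs by (rule pwc_evs)
next
  fix m t assume "m < n" "(0::real) \<le> t"
  then show "(locB C m t = None) = (m \<in> C \<and> 0 \<le> t)" by (simp add: locB_def)
next
  fix m assume "m < n" "\<not> (m \<in> C \<and> (0::real) \<le> 0)"
  then show "locB C m 0 = Some m" by (simp add: locB_def evs_refl fB_def)
next
  fix m t i j
  assume "m < n" "0 < t" "locB C m t \<noteq> None" "leftval (locB C m) t = Some i"
    "AL i j t \<and> \<not> occupied_before n (locB C) j t"
  then show "locB C m t = Some j" using locB_step[OF C] by blast
next
  fix m t i
  assume "m < n" "0 < t" "locB C m t \<noteq> None" "leftval (locB C m) t = Some i"
    "\<forall>j. \<not> (AL i j t \<and> \<not> occupied_before n (locB C) j t)"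
  then show "locB C m t = Some i" using locB_step[OF C] by blast
qed

lemma nonresil:
  assumes C: "C \<subseteq> {..<n}" and Cc: "P1 ` C \<subseteq> C" and m0: "m0 \<in> C"
  shows "\<not> resilient n c r f g (card C)"
proof
  assume res: "resilient n c r f g (card C)"
  have pre: "C \<subseteq> {..<n} \<and> card C \<le> card C \<and> (\<forall>m. (0::real) \<le> (\<lambda>_. 0) m) \<and> scs_run n c r f g C (\<lambda>_. 0) (locB C)"
    using C locB_run[OF C] by simp
  have "covered n c f g (locB C)"
    using res[unfolded resilient_def, rule_format, OF pre] .
  moreover have m0n: "m0 < n" using C m0 by blast
  moreover have "cmod (pos c f g m0 0 - c m0) = 1" by (simp add: pos_def)
  ultimately obtain t m where tm: "t \<ge> 0" "m < n" "locB C m t = Some m0" "pos c f g m0 t = pos c f g m0 0"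
    unfolding covered_def by blast
  have "t \<in> \<int>" using pos_int[OF m0n] tm(4) by blast
  then obtain w where w: "t = of_int w" by (auto elim: Ints_cases)
  then have "w \<ge> 0" using tm(1) by simp
  define N where "N = nat w"
  have tN: "t = of_nat N" using w \<open>w \<ge> 0\<close> by (simp add: N_def)
  have mC: "m \<notin> C" and X: "snd (fB C (evs 0 t)) m = m0" using tm(3) by (auto simp: locB_def split: if_splits)
  have "m0 \<in> FS (evs 0 t) ` ({..<n} - C)" using fB_inv[OF C, of "evs 0 t"] X mC tm(2) by blast
  then obtain a where a: "a < n" "a \<notin> C" "(P1 ^^ N) a = m0"
    using PP_nat[of N] tN by (auto simp: PP_def)
  have cpow: "(P1 ^^ N) ` C \<subseteq> C" for N
  proof (induction N)
    case 0 then show ?case by simp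
  next
    case (Suc N)
    then show ?case using Cc by auto
  qed
  have injpow: "inj (P1 ^^ N)" by (rule inj_fn[OF P1_inj])
  have "(P1 ^^ N) ` C = C"
    by (rule endo_inj_surj) (use C finite_subset cpow injpow in \<open>auto simp: inj_on_def inj_def\<close>)
  then obtain b where b: "b \<in> C" "(P1 ^^ N) b = m0" using m0 by (metis imageE)
  then have "a = b" using a(3) injpow by (simp add: inj_def)
  then show False using a(2) b(1) by simp
qed

end

lemma resilient_mono: "resilient n c r f g k' \<Longrightarrow> k \<le> k' \<Longrightarrow> resilient n c r f g k"
  unfolding resilient_def by (meson order_trans)

theorem lemma11:
  fixes n :: nat and c :: "nat \<Rightarrow> complex" and r :: real
    and f :: "nat \<Rightarrow> real" and g :: "nat \<Rightarrow> int" and k :: nat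
  assumes "n \<ge> 1"
    and "r > 0"
    and disjoint: "\<forall>i<n. \<forall>j<n. i \<noteq> j \<longrightarrow> cmod (c i - c j) > 2"
    and distinct_links: "\<forall>i j j'. adj n c r i j \<and> adj n c r i j' \<and> j \<noteq> j' \<longrightarrow> linkpt c i j \<noteq> linkpt c i j'"
    and "sync_schedule n c r f g"
    and kmin: "min_ring_robots n c r f g k"
  shows "uncovering_resilience n c r f g (int k - 1)"
proof -
  interpret scs n c r f g using distinct_links assms(5) by unfold_locales
  obtain R where R: "R \<in> rings n c r f g" "card (robots_in_ring n c f g R) = k"
    and allR: "\<forall>R \<in> rings n c r f g. k \<le> card (robots_in_ring n c f g R)"
    using kmin unfolding min_ring_robots_def by blast
  obtain i s tok where Ris: "R = ring_points c f g s tok" "i < n" "ring_trace n c r f g i s tok"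
    using R(1) unfolding rings_def by blast
  define j where "j = PP s (of_int \<lceil>s\<rceil>) i"
  have jn: "j < n" unfolding j_def PP_def using Ris(2) by (rule FS_lt)
  have kj: "k = card (orb j)" using R(2) robots_ring[OF Ris(3) Ris(2)] Ris(1) j_def by simp
  have kge: "\<forall>m<n. k \<le> card (orb m)"
  proof (intro allI impI)
    fix m assume m: "m < n"
    have "ring_points c f g 0 (\<lambda>t. PP 0 t m) \<in> rings n c r f g"
      unfolding rings_def using m tracer_exists[of m 0] by blast
    then have "k \<le> card (robots_in_ring n c f g (ring_points c f g 0 (\<lambda>t. PP 0 t m)))" using allR by blast
    also have "robots_in_ring n c f g (ring_points c f g 0 (\<lambda>t. PP 0 t m)) = orb (PP 0 (of_int \<lceil>0::real\<rceil>) m)"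
      by (rule robots_ring[OF tracer_exists m])
    also have "PP 0 (of_int \<lceil>0::real\<rceil>) m = m" by (simp add: Pi_refl)
    finally show "k \<le> card (orb m)" .
  qed
  have k1: "k \<ge> 1"
  proof -
    have "orb j \<noteq> {}" using orb_self by blast
    then show ?thesis using kj orb_finite[OF jn] by (simp add: Suc_le_eq card_gt_0_iff)
  qed
  have res: "resilient n c r f g (k - 1)" by (rule resil[OF kge k1])
  have nres: "\<not> resilient n c r f g k"
    using nonresil[OF orb_sub[OF jn] orb_closed orb_self] kj by simp
  show ?thesis
    unfolding uncovering_resilience_def
  proof
    have "int k - 1 = int (k - 1)" using k1 by simp
    then show "int k - 1 \<in> {int k' |k'. resilient n c r f g k'}" using res by blast
  next
    show "\<forall>y\<in>{int k' |k'. resilient n c r f g k'}. y \<le> int k - 1"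
    proof
      fix y assume "y \<in> {int k' |k'. resilient n c r f g k'}"
      then obtain k' where k': "y = int k'" "resilient n c r f g k'" by blast
      have "k' < k"
      proof (rule ccontr)
        assume "\<not> k' < k"
        then have "resilient n c r f g k" using resilient_mono[OF k'(2)] by simp
        then show False using nres by simp
      qed
      then show "y \<le> int k - 1" using k'(1) by simp
    qed
  qed
qed

end
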